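(* Let $\alpha_1,\alpha_2\in\mathbb{R}\setminus\{0\}$, $r=\alpha_2/\alpha_1$. For every $b\in\mathbb{R}$, there is no constant $C$ such that $$\|\partial_x(w_1w_2)\|_{X^{\alpha_2}_{s,b-1}}\le C\|w_1\|_{X^{\alpha_1}_{s,b}}\|w_2\|_{X^{\alpha_1}_{s,b}}$$ holds for all admissible $w_1,w_2$, in each of the following situations: (a) $r<\frac14$, $s<-\frac12$ (all $w_1,w_2\in X^{\alpha_1}_{s,b}$); (b) $r=1$, $s<-\frac12$, even when $w_1,w_2$ are restricted by $\hat w_1(0,\cdot)=\hat w_2(0,\cdot)=0$; (c) $r=1$, any $s\in\mathbb{R}$, when the restriction $\hat w_1(0,\cdot)=0$ or the restriction $\hat w_2(0,\cdot)=0$ is not imposed; (d) $r\in[\frac14,\infty)\setminus\{1\}$, $s<s_r$.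
   Context: On $\mathbb{T}=\mathbb{R}/(2\pi\mathbb{Z})$: $\hat w(k,\tau)=\int_\mathbb{R}\int_0^{2\pi}e^{-i(\tau t+kx)}w(x,t)\,dx\,dt$, $k\in\mathbb{Z}$; $\langle\cdot\rangle=1+|\cdot|$; $X^{\alpha}_{s,b}$ is the completion of Schwartz functions under $\|w\|=\|\langle k\rangle^s\langle\tau-\alpha k^3\rangle^b\hat w(k,\tau)\|_{L^2(\mathbb{Z}\times\mathbb{R})}$. Irrationality exponent $\mu(\rho)=\sup\{\mu:0<|\rho-m/n|<|n|^{-\mu}$ for infinitely many $(m,n)\in\mathbb{Z}\times(\mathbb{Z}\setminus\{0\})\}$; for $r\ge\frac14$, $\sigma_r=\mu(\sqrt{12r-3})$, $s_r=1$ if $\sigma_r=1$ or $\sigma_r\ge3$, $s_r=(\sigma_r-1)/2$ if $2\le\sigma_r<3$. *)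

theory Defs
  imports "HOL-Analysis.Analysis"
begin

definition jbr :: "real \<Rightarrow> real" where
  "jbr x = 1 + \<bar>x\<bar>"

text \<open>Functions on the Fourier side: F k tau stands for the space-time Fourier
  transform hat w(k,tau), k integer, tau real.\<close>

definition Xnorm :: "real \<Rightarrow> real \<Rightarrow> real \<Rightarrow> (int \<Rightarrow> real \<Rightarrow> complex) \<Rightarrow> real" where
  "Xnorm \<alpha> s b F = sqrt (enn2real
     (\<integral>\<^sup>+ k. (\<integral>\<^sup>+ \<tau>. ennreal ((jbr (real_of_int k) powr s
          * jbr (\<tau> - \<alpha> * (real_of_int k) ^ 3) powr b * cmod (F k \<tau>))\<^sup>2) \<partial>lborel)
      \<partial>count_space UNIV))"

definition smooth_fun :: "(real \<Rightarrow> complex) \<Rightarrow> bool" where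
  "smooth_fun f \<longleftrightarrow> (\<exists>g :: nat \<Rightarrow> real \<Rightarrow> complex. g 0 = f \<and>
      (\<forall>n x. (g n has_vector_derivative g (Suc n) x) (at x)))"

text \<open>Test functions (Fourier transforms of functions which are trigonometric
  polynomials in x and Schwartz in t): finitely many nonzero modes k, each mode
  smooth with compact support in tau.  These are dense in every X^alpha_{s,b}.\<close>
definition test_fn :: "(int \<Rightarrow> real \<Rightarrow> complex) \<Rightarrow> bool" where
  "test_fn F \<longleftrightarrow> finite {k. F k \<noteq> (\<lambda>_. 0)} \<and>
      (\<forall>k. smooth_fun (F k) \<and> bounded {\<tau>. F k \<tau> \<noteq> 0})"

text \<open>Fourier transform of d/dx (w1 w2), with the transform convention
  hat w(k,tau) = int int e^{-i(tau t + k x)} w dx dt, so that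
  hat (w1 w2) = (2 pi)^{-2} sum_{k1} int hat w1(k1,tau1) hat w2(k-k1,tau-tau1) dtau1.\<close>
definition dx_prod :: "(int \<Rightarrow> real \<Rightarrow> complex) \<Rightarrow> (int \<Rightarrow> real \<Rightarrow> complex) \<Rightarrow> int \<Rightarrow> real \<Rightarrow> complex" where
  "dx_prod F G = (\<lambda>k \<tau>. \<i> * of_int k * complex_of_real (1 / (4 * pi\<^sup>2)) *
      infsum (\<lambda>k1. \<integral> \<tau>1. F k1 \<tau>1 * G (k - k1) (\<tau> - \<tau>1) \<partial>lborel) UNIV)"

definition bilinear_est ::
  "real \<Rightarrow> real \<Rightarrow> real \<Rightarrow> real \<Rightarrow> ((int \<Rightarrow> real \<Rightarrow> complex) \<Rightarrow> bool)
     \<Rightarrow> ((int \<Rightarrow> real \<Rightarrow> complex) \<Rightarrow> bool) \<Rightarrow> bool" where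
  "bilinear_est \<alpha>1 \<alpha>2 s b P1 P2 \<longleftrightarrow> (\<exists>C::real. \<forall>F G. test_fn F \<longrightarrow> test_fn G \<longrightarrow>
      P1 F \<longrightarrow> P2 G \<longrightarrow>
      Xnorm \<alpha>2 s (b - 1) (dx_prod F G) \<le> C * Xnorm \<alpha>1 s b F * Xnorm \<alpha>1 s b G)"

definition irr_exp :: "real \<Rightarrow> ereal" where
  "irr_exp \<rho> = Sup {ereal \<mu> | \<mu>. infinite {(m :: int, n :: int). n \<noteq> 0 \<and>
      0 < \<bar>\<rho> - real_of_int m / real_of_int n\<bar> \<and>
      \<bar>\<rho> - real_of_int m / real_of_int n\<bar> < \<bar>real_of_int n\<bar> powr (- \<mu>)}}"

definition sigma_r :: "real \<Rightarrow> ereal" where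
  "sigma_r r = irr_exp (sqrt (12 * r - 3))"

definition s_r :: "real \<Rightarrow> real" where
  "s_r r = (if sigma_r r = 1 \<or> sigma_r r \<ge> 3 then 1
            else if 2 \<le> sigma_r r \<and> sigma_r r < 3 then (real_of_ereal (sigma_r r) - 1) / 2
            else undefined)"

end

theory Submission
  imports Defs "HOL-Computational_Algebra.Polynomial" "HOL-Analysis.Kronecker_Approximation_Theorem"
begin

definition real_smooth :: "(real \<Rightarrow> real) \<Rightarrow> bool" where
  "real_smooth f \<longleftrightarrow> (\<exists>g :: nat \<Rightarrow> real \<Rightarrow> real. g 0 = f \<and>
      (\<forall>n x. (g n has_real_derivative g (Suc n) x) (at x)))"

fun Pe :: "nat \<Rightarrow> real poly" where
  "Pe 0 = 1"
| "Pe (Suc n) = [:0,0,1:] * (Pe n - pderiv (Pe n))"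

definition ge :: "nat \<Rightarrow> real \<Rightarrow> real" where
  "ge n x = (if x > 0 then poly (Pe n) (1/x) * exp (-1/x) else 0)"

lemma poly_div_exp_0: "((\<lambda>u. poly q u / exp u) \<longlongrightarrow> (0::real)) at_top"
proof -
  have "((\<lambda>u. \<Sum>i\<le>degree q. coeff q i * (u ^ i / exp u)) \<longlongrightarrow> (\<Sum>i\<le>degree q. coeff q i * 0)) at_top"
    by (intro tendsto_sum tendsto_mult tendsto_const tendsto_power_div_exp_0)
  then show ?thesis
    by (simp add: poly_altdef sum_divide_distrib)
qed

lemma ge_deriv: "(ge n has_real_derivative ge (Suc n) x) (at x)"
proof -
  consider "x > 0" | "x < 0" | "x = 0" by linarith
  then show ?thesis
  proof cases
    case 1
    have "((\<lambda>x. poly (Pe n) (1/x) * exp (-1/x)) has_real_derivative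
          poly (pderiv (Pe n)) (1/x) * (- 1 / x^2) * exp (-1/x) + poly (Pe n) (1/x) * (exp (-1/x) * (1/x^2))) (at x)"
      using 1
      by (auto intro!: derivative_eq_intros DERIV_chain2[OF poly_DERIV] simp: power2_eq_square field_simps)
    moreover have "poly (pderiv (Pe n)) (1/x) * (- 1 / x^2) * exp (-1/x) + poly (Pe n) (1/x) * (exp (-1/x) * (1/x^2))
        = ge (Suc n) x"
      using 1 by (simp add: ge_def algebra_simps power2_eq_square divide_simps)
    ultimately have "((\<lambda>x. poly (Pe n) (1/x) * exp (-1/x)) has_real_derivative ge (Suc n) x) (at x)"
      by simp
    then show ?thesis
      apply (rule has_field_derivative_transform_within_open[where S="{0<..}"])
      using 1 by (auto simp: ge_def)
  next
    case 2
    have "((\<lambda>x. 0) has_real_derivative 0) (at x)" by simp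
    then have "((\<lambda>x. 0) has_real_derivative ge (Suc n) x) (at x)" using 2 by (simp add: ge_def)
    then show ?thesis
      apply (rule has_field_derivative_transform_within_open[where S="{..<0}"])
      using 2 by (auto simp: ge_def)
  next
    case 3
    have R: "((\<lambda>y. (ge n y - ge n 0) / (y - 0)) \<longlongrightarrow> 0) (at_right 0)"
    proof -
      have "((\<lambda>y. poly (pCons 0 (Pe n)) (inverse y) / exp (inverse y)) \<longlongrightarrow> 0) (at_right (0::real))"
        by (rule filterlim_compose[OF poly_div_exp_0 filterlim_inverse_at_top_right])
      moreover have "eventually (\<lambda>y. poly (pCons 0 (Pe n)) (inverse y) / exp (inverse y) = (ge n y - ge n 0) / (y - 0)) (at_right (0::real))"
        by (auto simp: eventually_at_right_less ge_def exp_minus field_simps eventually_at_right_field intro!: exI[of _ 1])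
      ultimately show ?thesis by (rule Lim_transform_eventually)
    qed
    have L: "((\<lambda>y. (ge n y - ge n 0) / (y - 0)) \<longlongrightarrow> 0) (at_left 0)"
    proof -
      have "eventually (\<lambda>y. 0 = (ge n y - ge n 0) / (y - 0)) (at_left (0::real))"
        by (auto simp: ge_def eventually_at_left_field intro!: exI[of _ "-1"])
      then show ?thesis by (rule Lim_transform_eventually[OF tendsto_const])
    qed
    have "((\<lambda>y. (ge n y - ge n 0) / (y - 0)) \<longlongrightarrow> 0) (at 0)"
      using L R by (simp add: filterlim_at_split)
    then show ?thesis using 3 by (simp add: has_field_derivative_iff ge_def)
  qed
qed


lemma real_smooth_e: "real_smooth (ge 0)"
  unfolding real_smooth_def using ge_deriv by blast

lemma real_smooth_affine:
  assumes "real_smooth f" shows "real_smooth (\<lambda>x. f (c + d * x))"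
proof -
  obtain g where g: "g 0 = f" "\<And>n x. (g n has_real_derivative g (Suc n) x) (at x)"
    using assms unfolding real_smooth_def by blast
  define h where "h n x = d ^ n * g n (c + d * x)" for n x
  have "(h n has_real_derivative h (Suc n) x) (at x)" for n x
  proof -
    have "((\<lambda>x. d ^ n * g n (c + d * x)) has_real_derivative d ^ n * (g (Suc n) (c + d * x) * d)) (at x)"
      by (intro DERIV_cmult DERIV_chain2[OF g(2)]) (auto intro!: derivative_eq_intros)
    then show ?thesis unfolding h_def by (simp add: mult_ac)
  qed
  moreover have "h 0 = (\<lambda>x. f (c + d * x))" by (simp add: h_def g fun_eq_iff)
  ultimately show ?thesis unfolding real_smooth_def by blast
qed

lemma Suc_choose': "Suc n choose k = (n choose k) + (if k = 0 then 0 else (n choose (k-1)))"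
  by (cases k) auto

lemma real_smooth_mult:
  assumes "real_smooth f" "real_smooth g" shows "real_smooth (\<lambda>x. f x * g x)"
proof -
  obtain F where F: "F 0 = f" "\<And>n x. (F n has_real_derivative F (Suc n) x) (at x)"
    using assms(1) unfolding real_smooth_def by blast
  obtain G where G: "G 0 = g" "\<And>n x. (G n has_real_derivative G (Suc n) x) (at x)"
    using assms(2) unfolding real_smooth_def by blast
  define H where "H n x = (\<Sum>i = 0..n. of_nat (n choose i) * F i x * G (n-i) x)" for n x
  have "(H n has_real_derivative H (Suc n) x) (at x)" for n x
  proof -
    have sumeq: "(\<Sum>i = 0..n.
               of_nat (n choose i) * (F (Suc i) x * G (n-i) x + G (Suc (n-i)) x * F i x)) =
            G 0 x * F (Suc n) x + (\<Sum>i = 0..n. F i x * (of_nat (Suc n choose i) * G (Suc n - i) x))"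
      apply (simp add: Suc_choose' algebra_simps sum.distrib)
      apply (subst (4) sum_Suc_reindex)
      apply (auto simp: algebra_simps Suc_diff_le intro: sum.cong)
      done
    have "(H n has_real_derivative (\<Sum>i = 0..n.
               of_nat (n choose i) * (F (Suc i) x * G (n-i) x + G (Suc (n-i)) x * F i x))) (at x)"
      unfolding H_def
      apply (rule DERIV_sum)
      apply (rule DERIV_cong)
       apply (rule DERIV_mult[OF DERIV_cmult[OF F(2)] G(2)])
      apply (simp add: algebra_simps)
      done
    moreover have "H (Suc n) x = G 0 x * F (Suc n) x + (\<Sum>i = 0..n. F i x * (of_nat (Suc n choose i) * G (Suc n - i) x))"
      unfolding H_def by (simp add: sum.atLeast0_atMost_Suc algebra_simps)
    ultimately show ?thesis using sumeq by simp
  qed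
  moreover have "H 0 = (\<lambda>x. f x * g x)" by (simp add: H_def F G fun_eq_iff)
  ultimately show ?thesis unfolding real_smooth_def by blast
qed

lemma smooth_fun_of_real:
  assumes "real_smooth f" shows "smooth_fun (\<lambda>x. complex_of_real (f x))"
proof -
  obtain F where F: "F 0 = f" "\<And>n x. (F n has_real_derivative F (Suc n) x) (at x)"
    using assms(1) unfolding real_smooth_def by blast
  define G where "G n x = complex_of_real (F n x)" for n x
  have "(G n has_vector_derivative G (Suc n) x) (at x)" for n x
    unfolding G_def by (rule has_vector_derivative_of_real[OF F(2)])
  moreover have "G 0 = (\<lambda>x. complex_of_real (f x))" by (simp add: G_def F fun_eq_iff)
  ultimately show ?thesis unfolding smooth_fun_def by blast
qed

lemma smooth_fun_zero: "smooth_fun (\<lambda>_. 0)"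
  unfolding smooth_fun_def by (rule exI[of _ "\<lambda>_ _. 0"]) simp

definition phi :: "real \<Rightarrow> real" where
  "phi x = ge 0 x * ge 0 (1 - x)"

lemma real_smooth_phi: "real_smooth phi"
proof -
  have "real_smooth (\<lambda>x. ge 0 (0 + 1 * x) * ge 0 (1 + (-1) * x))"
    by (intro real_smooth_mult real_smooth_affine real_smooth_e)
  then show ?thesis by (simp add: phi_def[abs_def])
qed

lemma phi_nonneg: "0 \<le> phi x"
  by (simp add: phi_def ge_def)

lemma phi_le1: "phi x \<le> 1"
  by (auto simp: phi_def ge_def mult_le_one)

lemma phi_zero: "x \<le> 0 \<or> 1 \<le> x \<Longrightarrow> phi x = 0"
  by (auto simp: phi_def ge_def)

lemma phi_lower: assumes "1/4 \<le> x" "x \<le> 3/4" shows "exp (-8) \<le> phi x"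
proof -
  have a: "exp (-4) \<le> exp (-1/x)" using assms by (auto simp: field_simps)
  have b: "exp (-4) \<le> exp (-1/(1-x))" using assms by (auto simp: field_simps)
  have "exp (-8) = exp (-4) * (exp (-4) :: real)" by (simp flip: exp_add)
  also have "\<dots> \<le> exp (-1/x) * exp (-1/(1-x))"
    by (intro mult_mono a b) auto
  finally show ?thesis using assms by (simp add: phi_def ge_def)
qed

lemma continuous_phi: "continuous_on UNIV phi"
proof -
  obtain F where F: "F 0 = phi" "\<And>n x. (F n has_real_derivative F (Suc n) x) (at x)"
    using real_smooth_phi unfolding real_smooth_def by blast
  show ?thesis using F
    by (metis DERIV_isCont continuous_at_imp_continuous_on)
qed

lemma continuous_on_phi_comp[continuous_intros]:
  "continuous_on S f \<Longrightarrow> continuous_on S (\<lambda>x. phi (f x))"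
  using continuous_on_compose2[OF continuous_phi] by blast

lemma infsum_single':
  assumes "\<And>x. x \<noteq> a \<Longrightarrow> f x = 0"
  shows "infsum f UNIV = f a"
proof -
  have "infsum f UNIV = infsum f {a}"
    by (rule infsum_cong_neutral) (use assms in auto)
  also have "\<dots> = f a" by simp
  finally show ?thesis .
qed

definition sng :: "int \<Rightarrow> real \<Rightarrow> int \<Rightarrow> real \<Rightarrow> complex" where
  "sng k0 a = (\<lambda>k \<tau>. if k = k0 then complex_of_real (phi (\<tau> - a)) else 0)"

lemma test_fn_sng: "test_fn (sng k0 a)"
proof -
  have "finite {k. sng k0 a k \<noteq> (\<lambda>_. 0)}"
    by (rule finite_subset[of _ "{k0}"]) (auto simp: sng_def)
  moreover have "smooth_fun (sng k0 a k)" for k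
  proof (cases "k = k0")
    case True
    have "real_smooth (\<lambda>x. phi ((-a) + 1 * x))"
      by (intro real_smooth_affine real_smooth_phi)
    then have "smooth_fun (\<lambda>x. complex_of_real (phi ((-a) + 1 * x)))"
      by (rule smooth_fun_of_real)
    then show ?thesis using True by (simp add: sng_def)
  next
    case False
    then show ?thesis by (simp add: sng_def smooth_fun_zero)
  qed
  moreover have "bounded {\<tau>. sng k0 a k \<tau> \<noteq> 0}" for k
  proof -
    have "{\<tau>. sng k0 a k \<tau> \<noteq> 0} \<subseteq> {a..a+1}"
    proof
      fix \<tau> assume "\<tau> \<in> {\<tau>. sng k0 a k \<tau> \<noteq> 0}"
      then have "phi (\<tau> - a) \<noteq> 0" by (auto simp: sng_def split: if_splits)
      then show "\<tau> \<in> {a..a+1}" using phi_zero[of "\<tau> - a"] by force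
    qed
    then show ?thesis by (rule bounded_subset[OF bounded_closed_interval])
  qed
  ultimately show ?thesis unfolding test_fn_def by blast
qed

lemma sng_zero: "k0 \<noteq> 0 \<Longrightarrow> sng k0 a 0 = (\<lambda>_. 0)"
  by (simp add: sng_def fun_eq_iff)

lemma jbr_pos: "0 < jbr x" by (simp add: jbr_def add_pos_nonneg)

lemma jbr_cmp:
  assumes "\<bar>x - c\<bar> \<le> 2"
  shows "jbr x powr p \<le> 3 powr \<bar>p\<bar> * jbr c powr p"
proof -
  have u: "jbr x \<le> 3 * jbr c" and l: "jbr c \<le> 3 * jbr x" using assms by (auto simp: jbr_def)
  have px: "0 < jbr x" and pc: "0 < jbr c" by (rule jbr_pos)+
  show ?thesis
  proof (cases "p \<ge> 0")
    case True
    have "jbr x powr p \<le> (3 * jbr c) powr p" by (intro powr_mono2 True u) (use px in auto)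
    also have "\<dots> = 3 powr \<bar>p\<bar> * jbr c powr p" using True pc by (simp add: powr_mult)
    finally show ?thesis .
  next
    case False
    have "(jbr c / 3) powr (-p) \<le> jbr x powr (-p)" by (intro powr_mono2) (use False pc l in auto)
    then have "inverse (jbr x powr (-p)) \<le> inverse ((jbr c / 3) powr (-p))"
      using pc by (intro le_imp_inverse_le) auto
    also have "inverse ((jbr c / 3) powr (-p)) = 3 powr \<bar>p\<bar> * jbr c powr p"
      using False pc by (simp add: powr_divide powr_minus divide_simps)
    finally show ?thesis using px by (simp add: powr_minus)
  qed
qed

lemma jbr_cmp_low:
  assumes "\<bar>x - c\<bar> \<le> 2"
  shows "3 powr (-\<bar>p\<bar>) * jbr c powr p \<le> jbr x powr p"
proof -
  have "jbr c powr p \<le> 3 powr \<bar>p\<bar> * jbr x powr p" by (rule jbr_cmp) (use assms in auto)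
  then show ?thesis by (simp add: powr_minus field_simps)
qed

lemma nn_ind: "(\<integral>\<^sup>+\<tau>. ennreal (V * indicator {c..d} \<tau>) \<partial>lborel) = ennreal (V * (d - c))"
  if "0 \<le> V" "c \<le> d" for V c d :: real
proof -
  have "(\<integral>\<^sup>+\<tau>. ennreal (V * indicator {c..d} \<tau>) \<partial>lborel) = (\<integral>\<^sup>+\<tau>. ennreal V * indicator {c..d} \<tau> \<partial>lborel)"
    by (intro nn_integral_cong) (auto simp: indicator_def)
  also have "\<dots> = ennreal V * emeasure lborel {c..d}"
    by (rule nn_integral_cmult_indicator) simp
  also have "\<dots> = ennreal (V * (d - c))" using that by (simp add: ennreal_mult)
  finally show ?thesis .
qed

lemma nn_upper:
  fixes g :: "real \<Rightarrow> real"
  assumes "\<And>\<tau>. g \<tau> \<le> V * indicator {c..d} \<tau>" "0 \<le> V" "c \<le> d"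
  shows "(\<integral>\<^sup>+\<tau>. ennreal (g \<tau>) \<partial>lborel) \<le> ennreal (V * (d - c))"
proof -
  have "(\<integral>\<^sup>+\<tau>. ennreal (g \<tau>) \<partial>lborel) \<le> (\<integral>\<^sup>+\<tau>. ennreal (V * indicator {c..d} \<tau>) \<partial>lborel)"
    by (intro nn_integral_mono ennreal_leI assms)
  then show ?thesis using nn_ind[OF assms(2,3)] by simp
qed

lemma nn_upper_real:
  fixes g :: "real \<Rightarrow> real"
  assumes "\<And>\<tau>. g \<tau> \<le> V * indicator {c..d} \<tau>" "0 \<le> V" "c \<le> d"
  shows "enn2real (\<integral>\<^sup>+\<tau>. ennreal (g \<tau>) \<partial>lborel) \<le> V * (d - c)"
proof -
  have "enn2real (\<integral>\<^sup>+\<tau>. ennreal (g \<tau>) \<partial>lborel) \<le> enn2real (ennreal (V * (d - c)))"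
    by (intro enn2real_mono nn_upper assms) auto
  then show ?thesis using assms by simp
qed

lemma nn_lower_real:
  fixes g :: "real \<Rightarrow> real"
  assumes "\<And>\<tau>. L * indicator {c..d} \<tau> \<le> g \<tau>" "0 \<le> L" "c \<le> d"
    and fin: "(\<integral>\<^sup>+\<tau>. ennreal (g \<tau>) \<partial>lborel) < \<infinity>"
  shows "L * (d - c) \<le> enn2real (\<integral>\<^sup>+\<tau>. ennreal (g \<tau>) \<partial>lborel)"
proof -
  have "ennreal (L * (d - c)) \<le> (\<integral>\<^sup>+\<tau>. ennreal (g \<tau>) \<partial>lborel)"
    using nn_ind[OF assms(2,3)] by (metis assms(1) ennreal_leI nn_integral_mono)
  then have "enn2real (ennreal (L * (d - c))) \<le> enn2real (\<integral>\<^sup>+\<tau>. ennreal (g \<tau>) \<partial>lborel)"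
    using fin by (intro enn2real_mono) auto
  then show ?thesis using assms by simp
qed

lemma Xnorm_single_mode:
  assumes "\<And>k. k \<noteq> k0 \<Longrightarrow> F k = (\<lambda>_. 0)"
  shows "Xnorm \<alpha> s b F = sqrt (enn2real (\<integral>\<^sup>+ \<tau>. ennreal ((jbr (real_of_int k0) powr s
          * jbr (\<tau> - \<alpha> * (real_of_int k0) ^ 3) powr b * cmod (F k0 \<tau>))\<^sup>2) \<partial>lborel))"
proof -
  have "(\<integral>\<^sup>+ k. (\<integral>\<^sup>+ \<tau>. ennreal ((jbr (real_of_int k) powr s
          * jbr (\<tau> - \<alpha> * (real_of_int k) ^ 3) powr b * cmod (F k \<tau>))\<^sup>2) \<partial>lborel) \<partial>count_space UNIV)
      = (\<Sum>k\<in>{k0}. (\<integral>\<^sup>+ \<tau>. ennreal ((jbr (real_of_int k) powr s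
          * jbr (\<tau> - \<alpha> * (real_of_int k) ^ 3) powr b * cmod (F k \<tau>))\<^sup>2) \<partial>lborel))"
    by (rule nn_integral_count_space') (auto simp: assms)
  then show ?thesis by (simp add: Xnorm_def)
qed

lemma Xnorm_sng_upper:
  "Xnorm \<alpha> s b (sng k0 a) \<le> 3 powr \<bar>b\<bar> * jbr (real_of_int k0) powr s * jbr (a - \<alpha> * (real_of_int k0)^3) powr b"
proof -
  define U where "U = 3 powr \<bar>b\<bar> * jbr (real_of_int k0) powr s * jbr (a - \<alpha> * (real_of_int k0)^3) powr b"
  have U0: "0 \<le> U" by (simp add: U_def)
  have "Xnorm \<alpha> s b (sng k0 a) = sqrt (enn2real (\<integral>\<^sup>+ \<tau>. ennreal ((jbr (real_of_int k0) powr s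
          * jbr (\<tau> - \<alpha> * (real_of_int k0) ^ 3) powr b * cmod (sng k0 a k0 \<tau>))\<^sup>2) \<partial>lborel))"
    by (rule Xnorm_single_mode) (simp add: sng_def fun_eq_iff)
  also have "\<dots> \<le> sqrt (U\<^sup>2 * ((a+1) - a))"
  proof (intro real_sqrt_le_mono nn_upper_real)
    fix \<tau>
    show "(jbr (real_of_int k0) powr s * jbr (\<tau> - \<alpha> * (real_of_int k0) ^ 3) powr b * cmod (sng k0 a k0 \<tau>))\<^sup>2
        \<le> U\<^sup>2 * indicator {a..a+1} \<tau>"
    proof (cases "\<tau> \<in> {a..a+1}")
      case True
      have w: "jbr (\<tau> - \<alpha> * (real_of_int k0) ^ 3) powr b \<le> 3 powr \<bar>b\<bar> * jbr (a - \<alpha> * (real_of_int k0)^3) powr b"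
        by (rule jbr_cmp) (use True in auto)
      have "jbr (real_of_int k0) powr s * jbr (\<tau> - \<alpha> * (real_of_int k0) ^ 3) powr b * cmod (sng k0 a k0 \<tau>)
          \<le> jbr (real_of_int k0) powr s * (3 powr \<bar>b\<bar> * jbr (a - \<alpha> * (real_of_int k0)^3) powr b) * 1"
        by (intro mult_mono w mult_left_mono) (auto simp: sng_def phi_le1 phi_nonneg)
      then have "jbr (real_of_int k0) powr s * jbr (\<tau> - \<alpha> * (real_of_int k0) ^ 3) powr b * cmod (sng k0 a k0 \<tau>) \<le> U"
        by (simp add: U_def mult_ac)
      then show ?thesis using True by (simp add: power_mono)
    next
      case False
      then have "phi (\<tau> - a) = 0" by (intro phi_zero) auto
      then show ?thesis using False by (simp add: sng_def)
    qed
  qed (use U0 in auto)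
  also have "\<dots> = U" using U0 by simp
  finally show ?thesis by (simp add: U_def)
qed

definition conv :: "real \<Rightarrow> real \<Rightarrow> real \<Rightarrow> real" where
  "conv a1 a2 \<tau> = (\<integral> t. phi (t - a1) * phi (\<tau> - t - a2) \<partial>lborel)"

lemma ind_integrable: "integrable lborel (indicator {c..d::real} :: real \<Rightarrow> real)"
  by (rule integrable_real_indicator) (auto simp: emeasure_lborel_Icc_eq)

lemma conv_integrable: "integrable lborel (\<lambda>t. phi (t - a1) * phi (\<tau> - t - a2))"
proof (rule Bochner_Integration.integrable_bound[OF ind_integrable[of a1 "a1+1"]])
  have "continuous_on UNIV (\<lambda>t. phi (t - a1) * phi (\<tau> - t - a2))"
    by (intro continuous_intros)
  then show "(\<lambda>t. phi (t - a1) * phi (\<tau> - t - a2)) \<in> borel_measurable lborel"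
    using borel_measurable_continuous_onI by simp
  show "AE t in lborel. norm (phi (t - a1) * phi (\<tau> - t - a2)) \<le> norm (indicator {a1..a1+1} t :: real)"
  proof (intro AE_I2)
    fix t
    show "norm (phi (t - a1) * phi (\<tau> - t - a2)) \<le> norm (indicator {a1..a1+1} t :: real)"
    proof (cases "t \<in> {a1..a1+1}")
      case True
      then show ?thesis using phi_le1 phi_nonneg by (simp add: mult_le_one)
    next
      case False
      then have "phi (t - a1) = 0" by (intro phi_zero) auto
      then show ?thesis by simp
    qed
  qed
qed

lemma conv_nonneg: "0 \<le> conv a1 a2 \<tau>"
  unfolding conv_def by (intro integral_nonneg_AE AE_I2) (simp add: phi_nonneg)

lemma conv_le1: "conv a1 a2 \<tau> \<le> 1"
proof -
  have "conv a1 a2 \<tau> \<le> (\<integral> t. indicator {a1..a1+1} t \<partial>lborel)"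
    unfolding conv_def
  proof (rule integral_mono[OF conv_integrable ind_integrable])
    fix t
    show "phi (t - a1) * phi (\<tau> - t - a2) \<le> indicator {a1..a1+1} t"
    proof (cases "t \<in> {a1..a1+1}")
      case True
      then show ?thesis using phi_le1 phi_nonneg by (simp add: mult_le_one)
    next
      case False
      then have "phi (t - a1) = 0" by (intro phi_zero) auto
      then show ?thesis by simp
    qed
  qed
  also have "\<dots> = 1" by simp
  finally show ?thesis .
qed

lemma conv_zero: assumes "\<tau> \<notin> {a1+a2..a1+a2+2}" shows "conv a1 a2 \<tau> = 0"
proof -
  have "phi (t - a1) * phi (\<tau> - t - a2) = 0" for t
  proof (rule ccontr)
    assume "phi (t - a1) * phi (\<tau> - t - a2) \<noteq> 0"
    then have "phi (t - a1) \<noteq> 0" "phi (\<tau> - t - a2) \<noteq> 0" by auto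
    then have "0 < t - a1" "t - a1 < 1" "0 < \<tau> - t - a2" "\<tau> - t - a2 < 1"
      using phi_zero[of "t - a1"] phi_zero[of "\<tau> - t - a2"] by force+
    then show False using assms by auto
  qed
  then have "(\<lambda>t. phi (t - a1) * phi (\<tau> - t - a2)) = (\<lambda>_. 0)" by (simp add: fun_eq_iff)
  then show ?thesis by (simp add: conv_def)
qed

lemma conv_lower:
  assumes "\<tau> \<in> {a1+a2+9/10..a1+a2+11/10}"
  shows "3/10 * exp (-16) \<le> conv a1 a2 \<tau>"
proof -
  have "(\<integral> t. exp (-16) * indicator {a1+35/100..a1+65/100} t \<partial>lborel) \<le> conv a1 a2 \<tau>"
    unfolding conv_def
  proof (rule integral_mono[OF _ conv_integrable])
    show "integrable lborel (\<lambda>t. exp (-16) * indicator {a1+35/100..a1+65/100} t :: real)"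
      by (intro integrable_mult_right ind_integrable)
    fix t
    show "exp (-16) * indicator {a1+35/100..a1+65/100} t \<le> phi (t - a1) * phi (\<tau> - t - a2)"
    proof (cases "t \<in> {a1+35/100..a1+65/100}")
      case True
      have "exp (-16) = exp (-8) * (exp (-8) :: real)" by (simp flip: exp_add)
      also have "\<dots> \<le> phi (t - a1) * phi (\<tau> - t - a2)"
        by (intro mult_mono phi_lower) (use True assms phi_nonneg in auto)
      finally show ?thesis using True by simp
    next
      case False
      then show ?thesis using phi_nonneg by simp
    qed
  qed
  moreover have "(\<integral> t. exp (-16) * indicator {a1+35/100..a1+65/100} t \<partial>lborel) = 3/10 * (exp (-16) :: real)"
    by (simp add: measure_def emeasure_lborel_Icc_eq)
  ultimately show ?thesis by simp
qed

lemma dxp_sng: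
  "dx_prod (sng k1 a1) (sng k2 a2) k \<tau> =
     (if k = k1 + k2 then \<i> * of_int k * complex_of_real (1 / (4 * pi\<^sup>2)) * complex_of_real (conv a1 a2 \<tau>) else 0)"
proof -
  have "infsum (\<lambda>k1'. \<integral> \<tau>1. sng k1 a1 k1' \<tau>1 * sng k2 a2 (k - k1') (\<tau> - \<tau>1) \<partial>lborel) UNIV
      = (\<integral> \<tau>1. sng k1 a1 k1 \<tau>1 * sng k2 a2 (k - k1) (\<tau> - \<tau>1) \<partial>lborel)"
    by (rule infsum_single') (simp add: sng_def)
  also have "\<dots> = (if k = k1 + k2 then complex_of_real (conv a1 a2 \<tau>) else 0)"
  proof (cases "k = k1 + k2")
    case True
    have "(\<integral> \<tau>1. sng k1 a1 k1 \<tau>1 * sng k2 a2 (k - k1) (\<tau> - \<tau>1) \<partial>lborel)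
       = (\<integral> \<tau>1. complex_of_real (phi (\<tau>1 - a1) * phi (\<tau> - \<tau>1 - a2)) \<partial>lborel)"
      using True by (simp add: sng_def)
    also have "\<dots> = complex_of_real (conv a1 a2 \<tau>)"
      unfolding conv_def by (rule integral_complex_of_real)
    finally show ?thesis using True by simp
  next
    case False
    then show ?thesis by (simp add: sng_def)
  qed
  finally show ?thesis by (simp add: dx_prod_def)
qed

lemma cmod_dxp:
  "cmod (dx_prod (sng k1 a1) (sng k2 a2) (k1 + k2) \<tau>) = \<bar>real_of_int (k1 + k2)\<bar> / (4 * pi\<^sup>2) * conv a1 a2 \<tau>"
proof -
  have "dx_prod (sng k1 a1) (sng k2 a2) (k1 + k2) \<tau> = \<i> * complex_of_real (real_of_int (k1 + k2) / (4 * pi\<^sup>2) * conv a1 a2 \<tau>)"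
    by (simp add: dxp_sng)
  then show ?thesis by (simp only: norm_mult norm_of_real abs_mult) (simp add: conv_nonneg)
qed

definition Lc :: "real \<Rightarrow> real" where
  "Lc b = 3 powr (-\<bar>b-1\<bar>) * (3/10 * exp (-16)) / (4 * pi\<^sup>2) * sqrt (1/5)"

lemma Lc_pos: "0 < Lc b"
  by (simp add: Lc_def)

lemma Xnorm_dxp_lower:
  fixes k1 k2 :: int and a1 a2 \<alpha>2 s b :: real
  defines "k \<equiv> k1 + k2"
  defines "c \<equiv> a1 + a2 - \<alpha>2 * (real_of_int k)^3"
  shows "Lc b * \<bar>real_of_int k\<bar> * jbr (real_of_int k) powr s * jbr c powr (b-1)
          \<le> Xnorm \<alpha>2 s (b-1) (dx_prod (sng k1 a1) (sng k2 a2))"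
proof -
  define P where "P = jbr (real_of_int k) powr s"
  define K where "K = \<bar>real_of_int k\<bar> / (4 * pi\<^sup>2)"
  define g where "g \<tau> = (P * jbr (\<tau> - \<alpha>2 * (real_of_int k) ^ 3) powr (b-1) * cmod (dx_prod (sng k1 a1) (sng k2 a2) k \<tau>))\<^sup>2" for \<tau>
  have P0: "0 \<le> P" and K0: "0 \<le> K" by (auto simp: P_def K_def)
  have cm: "cmod (dx_prod (sng k1 a1) (sng k2 a2) k \<tau>) = K * conv a1 a2 \<tau>" for \<tau>
    using cmod_dxp[of k1 a1 k2 a2 \<tau>] by (simp add: k_def K_def)
  have X: "Xnorm \<alpha>2 s (b-1) (dx_prod (sng k1 a1) (sng k2 a2)) = sqrt (enn2real (\<integral>\<^sup>+ \<tau>. ennreal (g \<tau>) \<partial>lborel))"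
    unfolding g_def P_def
    by (rule Xnorm_single_mode) (auto simp: fun_eq_iff dxp_sng k_def)
  define V where "V = (P * (3 powr \<bar>b-1\<bar> * jbr c powr (b-1)) * K)\<^sup>2"
  have gu: "g \<tau> \<le> V * indicator {a1+a2..a1+a2+2} \<tau>" for \<tau>
  proof (cases "\<tau> \<in> {a1+a2..a1+a2+2}")
    case True
    have w: "jbr (\<tau> - \<alpha>2 * (real_of_int k) ^ 3) powr (b-1) \<le> 3 powr \<bar>b-1\<bar> * jbr c powr (b-1)"
      by (rule jbr_cmp) (use True in \<open>auto simp: c_def\<close>)
    have "P * jbr (\<tau> - \<alpha>2 * (real_of_int k) ^ 3) powr (b-1) * (K * conv a1 a2 \<tau>)
        \<le> P * (3 powr \<bar>b-1\<bar> * jbr c powr (b-1)) * (K * 1)"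
      by (intro mult_mono mult_left_mono w conv_le1 P0 K0) (auto simp: conv_nonneg P0 K0)
    then show ?thesis using True
      by (simp add: g_def V_def cm power_mono conv_nonneg P0 K0)
  next
    case False
    then show ?thesis by (simp add: g_def cm conv_zero)
  qed
  have fin: "(\<integral>\<^sup>+ \<tau>. ennreal (g \<tau>) \<partial>lborel) < \<infinity>"
    using nn_upper[OF gu] by (simp add: V_def) (metis ennreal_less_top order_le_less_trans)
  define Lo where "Lo = (P * (3 powr (-\<bar>b-1\<bar>) * jbr c powr (b-1)) * K * (3/10 * exp (-16)))\<^sup>2"
  have gl: "Lo * indicator {a1+a2+9/10..a1+a2+11/10} \<tau> \<le> g \<tau>" for \<tau>
  proof (cases "\<tau> \<in> {a1+a2+9/10..a1+a2+11/10}")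
    case True
    have w: "3 powr (-\<bar>b-1\<bar>) * jbr c powr (b-1) \<le> jbr (\<tau> - \<alpha>2 * (real_of_int k) ^ 3) powr (b-1)"
      by (rule jbr_cmp_low) (use True in \<open>auto simp: c_def\<close>)
    have "P * (3 powr (-\<bar>b-1\<bar>) * jbr c powr (b-1)) * K * (3/10 * exp (-16))
        \<le> P * jbr (\<tau> - \<alpha>2 * (real_of_int k) ^ 3) powr (b-1) * (K * conv a1 a2 \<tau>)"
      using mult_mono[OF mult_left_mono[OF w P0] mult_left_mono[OF conv_lower[OF True] K0]]
      by (simp add: mult_ac P0 K0)
    then show ?thesis using True
      by (simp add: g_def Lo_def cm power_mono P0 K0)
  next
    case False
    then show ?thesis by (simp add: g_def)
  qed
  have "Lo * ((a1+a2+11/10) - (a1+a2+9/10)) \<le> enn2real (\<integral>\<^sup>+ \<tau>. ennreal (g \<tau>) \<partial>lborel)"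
    by (rule nn_lower_real[OF gl _ _ fin]) (auto simp: Lo_def)
  then have "sqrt (Lo * (1/5)) \<le> Xnorm \<alpha>2 s (b-1) (dx_prod (sng k1 a1) (sng k2 a2))"
    unfolding X by (intro real_sqrt_le_mono) simp
  moreover have "sqrt (Lo * (1/5)) = Lc b * \<bar>real_of_int k\<bar> * jbr (real_of_int k) powr s * jbr c powr (b-1)"
  proof -
    define X where "X = P * (3 powr (-\<bar>b-1\<bar>) * jbr c powr (b-1)) * K * (3/10 * exp (-16))"
    have X0: "0 \<le> X" using P0 K0 by (simp add: X_def)
    have "sqrt (Lo * (1/5)) = sqrt (X\<^sup>2) * sqrt (1/5)" by (simp only: Lo_def X_def real_sqrt_mult)
    also have "\<dots> = X * sqrt (1/5)" using X0 by simp
    also have "\<dots> = Lc b * \<bar>real_of_int k\<bar> * jbr (real_of_int k) powr s * jbr c powr (b-1)"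
      by (simp add: X_def Lc_def P_def K_def)
    finally show ?thesis .
  qed
  ultimately show ?thesis by simp
qed

definition Qf :: "real \<Rightarrow> real \<Rightarrow> real \<Rightarrow> int \<Rightarrow> int \<Rightarrow> real" where
  "Qf \<alpha>1 \<alpha>2 s k1 k2 = \<bar>real_of_int (k1 + k2)\<bar> * jbr (real_of_int (k1 + k2)) powr s
     * jbr (real_of_int k1) powr (-s) * jbr (real_of_int k2) powr (-s)
     * jbr (\<alpha>1 * (real_of_int k1 ^ 3 + real_of_int k2 ^ 3) - \<alpha>2 * real_of_int (k1 + k2) ^ 3) powr (-1/2)"

lemma jbr_nz [simp]: "jbr x \<noteq> 0" using jbr_pos[of x] by simp

lemma jbr_ge1: "1 \<le> jbr x" by (simp add: jbr_def)

lemma jbr_zero: "jbr 0 = 1" by (simp add: jbr_def)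

lemma jbr_uminus: "jbr (-x) = jbr x" by (simp add: jbr_def)

lemma fail_lemma:
  assumes H: "\<And>C. \<exists>k1 k2. (\<forall>a. P1 (sng k1 a)) \<and> (\<forall>a. P2 (sng k2 a)) \<and> C < Qf \<alpha>1 \<alpha>2 s k1 k2"
  shows "\<not> bilinear_est \<alpha>1 \<alpha>2 s b P1 P2"
proof
  assume "bilinear_est \<alpha>1 \<alpha>2 s b P1 P2"
  then obtain C where C: "\<And>F G. test_fn F \<Longrightarrow> test_fn G \<Longrightarrow> P1 F \<Longrightarrow> P2 G \<Longrightarrow>
      Xnorm \<alpha>2 s (b - 1) (dx_prod F G) \<le> C * Xnorm \<alpha>1 s b F * Xnorm \<alpha>1 s b G"
    unfolding bilinear_est_def by blast
  define C' where "C' = max C 0"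
  have C'0: "0 \<le> C'" by (simp add: C'_def)
  define M where "M = C' * 9 powr \<bar>b\<bar> / Lc b"
  obtain k1 k2 where P1: "\<And>a. P1 (sng k1 a)" and P2: "\<And>a. P2 (sng k2 a)" and QM: "M < Qf \<alpha>1 \<alpha>2 s k1 k2"
    using H by blast
  define k where "k = k1 + k2"
  define D where "D = \<alpha>1 * (real_of_int k1 ^ 3 + real_of_int k2 ^ 3) - \<alpha>2 * real_of_int (k1 + k2) ^ 3"
  define A1 where "A1 = jbr (real_of_int k1) powr s"
  define A2 where "A2 = jbr (real_of_int k2) powr s"
  define E where "E = jbr D"
  define B where "B = \<bar>real_of_int k\<bar> * jbr (real_of_int k) powr s"
  have A1p: "0 < A1" and A2p: "0 < A2" and Ep: "1 \<le> E" and B0: "0 \<le> B"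
    by (auto simp: A1_def A2_def E_def B_def jbr_pos jbr_ge1)
  have Q: "Qf \<alpha>1 \<alpha>2 s k1 k2 = B / (A1 * A2) * E powr (-1/2)"
    using jbr_pos[of "real_of_int k1"] jbr_pos[of "real_of_int k2"]
    by (simp add: Qf_def B_def A1_def A2_def E_def D_def k_def powr_minus divide_simps)
  have Lp: "0 < Lc b" by (rule Lc_pos)
  have 9: "3 powr \<bar>b\<bar> * 3 powr \<bar>b\<bar> = (9::real) powr \<bar>b\<bar>"
    by (simp flip: powr_mult)
  have XF0: "0 \<le> Xnorm \<alpha>1 s b F" for F by (simp add: Xnorm_def)
  have key: "C' * 9 powr \<bar>b\<bar> < Lc b * (B / (A1 * A2) * E powr (-1/2))"
    using QM Lp by (simp add: M_def Q field_simps)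
  show False
  proof (cases "b \<ge> 1/2")
    case True
    define a1 where "a1 = \<alpha>1 * real_of_int k1 ^ 3"
    define a2 where "a2 = \<alpha>1 * real_of_int k2 ^ 3"
    have XF: "Xnorm \<alpha>1 s b (sng k1 a1) \<le> 3 powr \<bar>b\<bar> * A1"
      using Xnorm_sng_upper[of \<alpha>1 s b k1 a1] by (simp add: a1_def A1_def jbr_zero)
    have XG: "Xnorm \<alpha>1 s b (sng k2 a2) \<le> 3 powr \<bar>b\<bar> * A2"
      using Xnorm_sng_upper[of \<alpha>1 s b k2 a2] by (simp add: a2_def A2_def jbr_zero)
    have LHS: "Lc b * B * E powr (b-1) \<le> Xnorm \<alpha>2 s (b-1) (dx_prod (sng k1 a1) (sng k2 a2))"
      using Xnorm_dxp_lower[of b k1 k2 s a1 a2 \<alpha>2]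
      by (simp add: B_def E_def D_def a1_def a2_def k_def algebra_simps)
    have "E powr (-1/2) \<le> E powr (b-1)"
      using True Ep by (intro powr_mono) auto
    then have "C' * 9 powr \<bar>b\<bar> < Lc b * (B / (A1 * A2) * E powr (b-1))"
      using key Lp B0 A1p A2p by (smt (verit) divide_nonneg_pos mult_left_mono mult_pos_pos)
    then have "C' * 9 powr \<bar>b\<bar> * (A1 * A2) < Lc b * B * E powr (b-1)"
      using A1p A2p by (simp add: field_simps)
    also have "\<dots> \<le> C * Xnorm \<alpha>1 s b (sng k1 a1) * Xnorm \<alpha>1 s b (sng k2 a2)"
      using LHS C[OF test_fn_sng test_fn_sng P1[of a1] P2[of a2]] by linarith
    also have "\<dots> \<le> C' * Xnorm \<alpha>1 s b (sng k1 a1) * Xnorm \<alpha>1 s b (sng k2 a2)"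
      unfolding C'_def by (intro mult_right_mono) (auto simp: XF0)
    also have "\<dots> \<le> C' * (3 powr \<bar>b\<bar> * A1) * (3 powr \<bar>b\<bar> * A2)"
      using A1p A2p Ep by (intro mult_mono mult_left_mono XF XG C'0 XF0) (auto simp: C'0 XF0)
    also have "\<dots> = C' * 9 powr \<bar>b\<bar> * (A1 * A2)"
      by (simp flip: 9 add: mult_ac)
    finally show False by simp
  next
    case False
    define a1 where "a1 = \<alpha>1 * real_of_int k1 ^ 3"
    define a2 where "a2 = \<alpha>2 * real_of_int k ^ 3 - a1"
    have XF: "Xnorm \<alpha>1 s b (sng k1 a1) \<le> 3 powr \<bar>b\<bar> * A1"
      using Xnorm_sng_upper[of \<alpha>1 s b k1 a1] by (simp add: a1_def A1_def jbr_zero)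
    have "a2 - \<alpha>1 * real_of_int k2 ^ 3 = - D"
      by (simp add: a2_def a1_def D_def k_def algebra_simps)
    then have XG: "Xnorm \<alpha>1 s b (sng k2 a2) \<le> 3 powr \<bar>b\<bar> * A2 * E powr b"
      using Xnorm_sng_upper[of \<alpha>1 s b k2 a2] by (simp add: A2_def E_def jbr_uminus)
    have LHS: "Lc b * B \<le> Xnorm \<alpha>2 s (b-1) (dx_prod (sng k1 a1) (sng k2 a2))"
      using Xnorm_dxp_lower[of b k1 k2 s a1 a2 \<alpha>2]
      by (simp add: B_def a2_def k_def jbr_zero)
    have "E powr (-1/2) \<le> E powr (-b)"
      using False Ep by (intro powr_mono) auto
    then have "C' * 9 powr \<bar>b\<bar> < Lc b * (B / (A1 * A2) * E powr (-b))"
      using key Lp B0 A1p A2p by (smt (verit) divide_nonneg_pos mult_left_mono mult_pos_pos)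
    then have "C' * 9 powr \<bar>b\<bar> * (A1 * A2 * E powr b) < Lc b * B"
      using A1p A2p Ep by (simp add: field_simps powr_minus)
    also have "\<dots> \<le> C * Xnorm \<alpha>1 s b (sng k1 a1) * Xnorm \<alpha>1 s b (sng k2 a2)"
      using LHS C[OF test_fn_sng test_fn_sng P1[of a1] P2[of a2]] by linarith
    also have "\<dots> \<le> C' * Xnorm \<alpha>1 s b (sng k1 a1) * Xnorm \<alpha>1 s b (sng k2 a2)"
      unfolding C'_def by (intro mult_right_mono) (auto simp: XF0)
    also have "\<dots> \<le> C' * (3 powr \<bar>b\<bar> * A1) * (3 powr \<bar>b\<bar> * A2 * E powr b)"
      using A1p A2p Ep by (intro mult_mono mult_left_mono XF XG C'0 XF0) (auto simp: C'0 XF0)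
    also have "\<dots> = C' * 9 powr \<bar>b\<bar> * (A1 * A2 * E powr b)"
      by (simp flip: 9 add: mult_ac)
    finally show False by simp
  qed
qed

lemma pw_bound:
  fixes A B X t p :: real
  assumes "0 < B" "B * t \<le> X" "X \<le> A * t" "0 < t"
  shows "min (A powr p) (B powr p) * t powr p \<le> X powr p"
proof (cases "p \<ge> 0")
  case True
  have "(B * t) powr p \<le> X powr p" by (intro powr_mono2) (use assms True in auto)
  then show ?thesis using assms by (simp add: powr_mult) (meson min.cobounded2 mult_right_mono order_trans powr_ge_zero)
next
  case False
  have "0 < X" using assms by (smt (verit) mult_pos_pos)
  have "X powr (-p) \<le> (A * t) powr (-p)" by (intro powr_mono2) (use assms False \<open>0 < X\<close> in auto)
  moreover note \<open>0 < X\<close>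
  moreover have "0 < A" using assms by (smt (verit) mult_pos_pos mult_le_cancel_right)
  ultimately have "(A * t) powr p \<le> X powr p"
    using assms by (simp add: powr_minus)
  then show ?thesis using assms \<open>0 < A\<close> by (simp add: powr_mult) (meson min.cobounded1 mult_right_mono order_trans powr_ge_zero)
qed

lemma exists_big:
  fixes e T :: real
  assumes "0 < e"
  shows "\<exists>N::nat. T < real N powr e"
proof -
  obtain N :: nat where N: "(\<bar>T\<bar> + 1) powr (1/e) \<le> real N"
    using real_arch_simple by blast
  have "\<bar>T\<bar> + 1 = ((\<bar>T\<bar> + 1) powr (1/e)) powr e" using assms by (simp add: powr_powr)
  also have "\<dots> \<le> real N powr e" by (intro powr_mono2) (use assms N in auto)
  finally show ?thesis by (intro exI[of _ N]) linarith
qed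

lemma ab_case:
  assumes s: "s < -1/2"
  shows "\<exists>k1 k2. k1 \<noteq> 0 \<and> k2 \<noteq> 0 \<and> C < Qf \<alpha>1 \<alpha>2 s k1 k2"
proof -
  define K where "K = 1 + 4 * \<bar>\<alpha>1\<bar> + \<bar>\<alpha>2\<bar>"
  define ee where "ee = -2 * s - 1"
  define c0 where "c0 = 2 powr s * K powr (-1/2)"
  have K1: "1 \<le> K" by (simp add: K_def)
  have ee0: "0 < ee" using s by (simp add: ee_def)
  have c0p: "0 < c0" using K1 by (simp add: c0_def)
  obtain N :: nat where N: "C / c0 < real N powr ee" using exists_big[OF ee0] by blast
  define n where "n = real (N + 2)"
  have n2: "2 \<le> n" by (simp add: n_def)
  have "real N powr ee \<le> n powr ee" by (intro powr_mono2) (use ee0 in \<open>auto simp: n_def\<close>)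
  with N have "C / c0 < n powr ee" by linarith
  then have Cl: "C < c0 * n powr ee" using c0p by (simp add: divide_less_eq mult.commute)
  define D where "D = \<alpha>1 * (n ^ 3 + (1 - n) ^ 3) - \<alpha>2"
  have Q: "Qf \<alpha>1 \<alpha>2 s (int (N+2)) (1 - int (N+2)) = 2 powr s * jbr n powr (-s) * jbr (1 - n) powr (-s) * jbr D powr (-1/2)"
    by (simp add: Qf_def n_def D_def jbr_def)
  have j1: "jbr (1 - n) = n" using n2 by (simp add: jbr_def)
  have j2: "n powr (-s) \<le> jbr n powr (-s)" by (intro powr_mono2) (use s n2 in \<open>auto simp: jbr_def\<close>)
  have nn: "2 * n \<le> n * n" using mult_right_mono[OF n2, of n] n2 by auto
  have id: "n ^ 3 + (1 - n) ^ 3 = 3 * (n * n) - 3 * n + 1"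
    by (simp add: power2_eq_square power3_eq_cube algebra_simps)
  have poly: "0 \<le> n ^ 3 + (1 - n) ^ 3" "n ^ 3 + (1 - n) ^ 3 \<le> 3 * n^2"
    unfolding id using nn n2 by (auto simp: power2_eq_square)
  have "\<bar>D\<bar> \<le> \<bar>\<alpha>1\<bar> * (3 * n^2) + \<bar>\<alpha>2\<bar>"
  proof -
    have "\<bar>D\<bar> \<le> \<bar>\<alpha>1\<bar> * \<bar>n ^ 3 + (1 - n) ^ 3\<bar> + \<bar>\<alpha>2\<bar>"
      unfolding D_def by (metis abs_mult abs_triangle_ineq4)
    also have "\<dots> \<le> \<bar>\<alpha>1\<bar> * (3 * n^2) + \<bar>\<alpha>2\<bar>"
      using poly by (intro add_mono mult_left_mono) auto
    finally show ?thesis .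
  qed
  moreover have n21: "1 \<le> n^2" using nn n2 unfolding power2_eq_square by linarith
  moreover have "\<bar>\<alpha>2\<bar> \<le> \<bar>\<alpha>2\<bar> * n^2" using mult_left_mono[OF n21, of "\<bar>\<alpha>2\<bar>"] by simp
  moreover have "0 \<le> \<bar>\<alpha>1\<bar> * n^2" by simp
  moreover have "\<bar>\<alpha>1\<bar> * (3 * n^2) \<le> \<bar>\<alpha>1\<bar> * (4 * n^2)" by (intro mult_left_mono) auto
  moreover have "K * n^2 = n^2 + \<bar>\<alpha>1\<bar> * (4 * n^2) + \<bar>\<alpha>2\<bar> * n^2" by (simp add: K_def algebra_simps)
  ultimately have jD: "jbr D \<le> K * n^2"
    unfolding jbr_def by linarith
  have jD': "(K * n^2) powr (-1/2) \<le> jbr D powr (-1/2)"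
    using jD by (intro powr_mono2') (auto simp: jbr_pos)
  have n2p: "n^2 = n powr 2" using n2 by (simp add: powr_realpow)
  have n2m: "(n^2) powr (-1/2) = n powr (-1)" unfolding n2p by (simp add: powr_powr)
  have Kn: "(K * n^2) powr (-1/2) = K powr (-1/2) * n powr (-1)"
    unfolding n2m[symmetric] using K1 n2 by (intro powr_mult; simp)
  have pe: "n powr ee = n powr (-s) * n powr (-s) * n powr (-1)"
  proof -
    have "ee = (-s) + (-s) + (-1)" by (simp add: ee_def)
    then show ?thesis by (simp only: powr_add)
  qed
  have "c0 * n powr ee = 2 powr s * n powr (-s) * n powr (-s) * (K * n^2) powr (-1/2)"
    unfolding Kn pe c0_def by (simp add: mult_ac)
  also have "\<dots> \<le> 2 powr s * jbr n powr (-s) * jbr (1 - n) powr (-s) * jbr D powr (-1/2)"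
    unfolding j1 by (intro mult_mono mult_left_mono j2 jD') auto
  finally have "C < Qf \<alpha>1 \<alpha>2 s (int (N+2)) (1 - int (N+2))" using Cl Q by simp
  then show ?thesis by (intro exI[of _ "int (N+2)"] exI[of _ "1 - int (N+2)"]) auto
qed

lemma c_case:
  shows "\<exists>N::int. N \<noteq> 0 \<and> C < Qf \<alpha> \<alpha> s 0 N \<and> C < Qf \<alpha> \<alpha> s N 0"
proof -
  obtain N :: nat where N: "C < real N powr 1" using exists_big[of 1 C] by auto
  have "C < real (N+1)" using N by (cases "N = 0") auto
  moreover have "Qf \<alpha> \<alpha> s 0 (int (N+1)) = real (N+1)" "Qf \<alpha> \<alpha> s (int (N+1)) 0 = real (N+1)"
    by (simp_all add: Qf_def jbr_zero powr_minus jbr_pos less_imp_le)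
  ultimately show ?thesis by (intro exI[of _ "int (N+1)"]) auto
qed

lemma d_core:
  fixes \<alpha>1 \<alpha>2 \<rho> \<mu> s C :: real
  assumes a2: "\<alpha>2 = \<alpha>1 * ((\<rho>^2 + 3)/12)" and rho0: "0 \<le> \<rho>" and rho3: "\<rho> \<noteq> 3"
    and mu1: "1 \<le> \<mu>" and mu3: "\<mu> \<le> 3" and s: "s < (\<mu>-1)/2"
    and H: "\<And>N0::nat. \<exists>n m :: int. int N0 \<le> n \<and> 0 < n \<and> \<bar>real_of_int m - real_of_int n * \<rho>\<bar> \<le> real_of_int n powr (1 - \<mu>)"
  shows "\<exists>k1 k2. C < Qf \<alpha>1 \<alpha>2 s k1 k2"
proof -
  define K where "K = 1 + 18 * \<bar>\<alpha>1\<bar> * (2 * \<rho> + 1)"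
  define A where "A = 7 + \<rho>"
  define B where "B = min 3 \<bar>3 - \<rho>\<bar>"
  define ee where "ee = (\<mu>-1)/2 - s"
  define cA where "cA t = min (A powr t) (B powr t)" for t
  define c0 where "c0 = 6 * cA s * cA (-s) * cA (-s) * K powr (-1/2)"
  have K1: "1 \<le> K" using rho0 by (simp add: K_def)
  have Bp: "0 < B" using rho3 by (simp add: B_def)
  have Ap: "0 < A" using rho0 by (simp add: A_def)
  have cAp: "0 < cA t" for t using Ap Bp by (simp add: cA_def)
  have ee0: "0 < ee" using s by (simp add: ee_def)
  have c0p: "0 < c0" using cAp K1 by (simp add: c0_def)
  obtain N :: nat where N: "C / c0 < real N powr ee" using exists_big[OF ee0] by blast
  obtain n m :: int where nN: "int (N+1) \<le> n" and n0: "0 < n"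
     and nm: "\<bar>real_of_int m - real_of_int n * \<rho>\<bar> \<le> real_of_int n powr (1 - \<mu>)"
    using H by blast
  define x where "x = real_of_int n"
  define y where "y = real_of_int m"
  define \<delta> where "\<delta> = y - x * \<rho>"
  have x1: "1 \<le> x" using n0 by (simp add: x_def)
  have xN: "real N \<le> x" using nN by (simp add: x_def)
  have d1: "\<bar>\<delta>\<bar> \<le> x powr (1 - \<mu>)" using nm by (simp add: \<delta>_def x_def y_def)
  have xp1: "x powr (1 - \<mu>) \<le> 1"
  proof -
    have "x powr (1 - \<mu>) \<le> x powr 0" by (intro powr_mono) (use mu1 x1 in auto)
    then show ?thesis using x1 by simp
  qed
  have d: "\<bar>\<delta>\<bar> \<le> 1" using d1 xp1 by linarith
  have "C < c0 * x powr ee"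
  proof -
    have "real N powr ee \<le> x powr ee" by (intro powr_mono2) (use ee0 xN in auto)
    with N have "C / c0 < x powr ee" by linarith
    then show ?thesis using c0p by (simp add: divide_less_eq mult.commute)
  qed
  have Bx: "B * x \<le> 3 * x" using x1 by (intro mult_right_mono) (auto simp: B_def)
  have rx: "0 \<le> x * \<rho>" using x1 rho0 by simp
  have Ax: "A * x = 7 * x + x * \<rho>" by (simp add: A_def algebra_simps)
  have bk: "B * x \<le> jbr (6 * x) \<and> jbr (6 * x) \<le> A * x"
  proof -
    have "jbr (6 * x) = 1 + 6 * x" using x1 by (simp add: jbr_def)
    then show ?thesis using x1 Bx rx Ax by linarith
  qed
  have bk1: "B * x \<le> jbr (3 * x + y) \<and> jbr (3 * x + y) \<le> A * x"
  proof -
    have "y \<ge> x * \<rho> - 1" using d by (simp add: \<delta>_def abs_le_iff)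
    moreover have "y \<le> x * \<rho> + 1" using d by (simp add: \<delta>_def abs_le_iff)
    ultimately have "jbr (3 * x + y) = 1 + 3 * x + y" using x1 rx by (simp add: jbr_def)
    then show ?thesis using x1 Bx rx Ax \<open>y \<ge> x * \<rho> - 1\<close> \<open>y \<le> x * \<rho> + 1\<close> by linarith
  qed
  have bk2: "B * x \<le> jbr (3 * x - y) \<and> jbr (3 * x - y) \<le> A * x"
  proof -
    have e1: "\<bar>3 - \<rho>\<bar> * x = \<bar>(3 - \<rho>) * x\<bar>" using x1 by (simp add: abs_mult)
    have e2: "(3 - \<rho>) * x = (3 * x - y) + \<delta>" by (simp add: \<delta>_def algebra_simps)
    have e3: "\<bar>(3 * x - y) + \<delta>\<bar> \<le> \<bar>3 * x - y\<bar> + \<bar>\<delta>\<bar>" by (rule abs_triangle_ineq)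
    have l: "\<bar>3 - \<rho>\<bar> * x \<le> \<bar>3 * x - y\<bar> + 1" using e1 e2 e3 d by linarith
    have Bx2: "B * x \<le> \<bar>3 - \<rho>\<bar> * x" using x1 by (intro mult_right_mono) (auto simp: B_def)
    have ya: "\<bar>y\<bar> \<le> x * \<rho> + 1" using d x1 rx by (simp add: \<delta>_def abs_le_iff)
    have tr: "\<bar>3 * x - y\<bar> \<le> 3 * x + \<bar>y\<bar>" using x1 by (simp add: abs_le_iff) linarith
    show ?thesis unfolding jbr_def using Bx2 ya l x1 tr Ax by linarith
  qed
  define D where "D = \<alpha>1 * ((3 * x + y) ^ 3 + (3 * x - y) ^ 3) - \<alpha>2 * (6 * x) ^ 3"
  have Did: "D = \<alpha>1 * 18 * x * \<delta> * (y + \<rho> * x)"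
    by (simp add: D_def a2 \<delta>_def power2_eq_square power3_eq_cube algebra_simps)
  have "\<bar>y + \<rho> * x\<bar> \<le> (2 * \<rho> + 1) * x"
  proof -
    have "y + \<rho> * x = \<delta> + 2 * (\<rho> * x)" by (simp add: \<delta>_def algebra_simps)
    then have "\<bar>y + \<rho> * x\<bar> \<le> \<bar>\<delta>\<bar> + \<bar>2 * (\<rho> * x)\<bar>" by (metis abs_triangle_ineq)
    then have "\<bar>y + \<rho> * x\<bar> \<le> \<bar>\<delta>\<bar> + 2 * \<rho> * x" using rx by (simp add: mult_ac)
    then show ?thesis using d x1 by (simp add: algebra_simps)
  qed
  then have "\<bar>D\<bar> \<le> \<bar>\<alpha>1\<bar> * 18 * x * x powr (1 - \<mu>) * ((2 * \<rho> + 1) * x)"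
    unfolding Did abs_mult using x1 d1
    by (intro mult_mono mult_left_mono) auto
  also have "\<dots> = 18 * \<bar>\<alpha>1\<bar> * (2 * \<rho> + 1) * x powr (3 - \<mu>)"
  proof -
    have "x * x powr (1 - \<mu>) * x = x powr (3 - \<mu>)"
    proof -
      have "3 - \<mu> = 1 + (1 - \<mu>) + 1" by simp
      then have "x powr (3 - \<mu>) = x powr 1 * x powr (1 - \<mu>) * x powr 1"
        by (simp only: powr_add)
      then show ?thesis using x1 by simp
    qed
    then show ?thesis by (simp add: mult_ac)
  qed
  finally have Db: "\<bar>D\<bar> \<le> 18 * \<bar>\<alpha>1\<bar> * (2 * \<rho> + 1) * x powr (3 - \<mu>)" .
  have x3: "1 \<le> x powr (3 - \<mu>)" using x1 mu3 by (simp add: ge_one_powr_ge_zero)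
  have jD: "jbr D \<le> K * x powr (3 - \<mu>)"
    using Db x3 by (simp add: jbr_def K_def algebra_simps)
  have jD': "(K * x powr (3 - \<mu>)) powr (-1/2) \<le> jbr D powr (-1/2)"
    using jD by (intro powr_mono2') (auto simp: jbr_pos)
  have Kx: "(K * x powr (3 - \<mu>)) powr (-1/2) = K powr (-1/2) * x powr ((\<mu> - 3)/2)"
  proof -
    have "(K * x powr (3 - \<mu>)) powr (-1/2) = K powr (-1/2) * (x powr (3 - \<mu>)) powr (-1/2)"
      using K1 x1 by (intro powr_mult; simp)
    also have "(x powr (3 - \<mu>)) powr (-1/2) = x powr ((3 - \<mu>) * (-1/2))" by (simp only: powr_powr)
    also have "(3 - \<mu>) * (-1/2) = (\<mu> - 3)/2" by (simp add: field_simps)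
    finally show ?thesis .
  qed
  have pe: "x powr ee = x powr 1 * x powr s * x powr (-s) * x powr (-s) * x powr ((\<mu> - 3)/2)"
  proof -
    have "ee = 1 + s + (-s) + (-s) + ((\<mu> - 3)/2)" by (simp add: ee_def field_simps)
    then show ?thesis by (simp only: powr_add)
  qed
  have Q: "Qf \<alpha>1 \<alpha>2 s (3 * n + m) (3 * n - m) = 6 * x * jbr (6 * x) powr s * jbr (3 * x + y) powr (-s)
      * jbr (3 * x - y) powr (-s) * jbr D powr (-1/2)"
    using x1 by (simp add: Qf_def x_def y_def D_def)
  have f1: "cA s * x powr s \<le> jbr (6 * x) powr s"
    unfolding cA_def by (rule pw_bound[OF Bp]) (use bk x1 in auto)
  have f2: "cA (-s) * x powr (-s) \<le> jbr (3 * x + y) powr (-s)"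
    unfolding cA_def by (rule pw_bound[OF Bp]) (use bk1 x1 in auto)
  have f3: "cA (-s) * x powr (-s) \<le> jbr (3 * x - y) powr (-s)"
    unfolding cA_def by (rule pw_bound[OF Bp]) (use bk2 x1 in auto)
  have "c0 * x powr ee = 6 * x * (cA s * x powr s) * (cA (-s) * x powr (-s)) * (cA (-s) * x powr (-s))
        * (K * x powr (3 - \<mu>)) powr (-1/2)"
    unfolding pe Kx c0_def using x1 by (simp add: mult_ac)
  also have "\<dots> \<le> 6 * x * jbr (6 * x) powr s * jbr (3 * x + y) powr (-s)
      * jbr (3 * x - y) powr (-s) * jbr D powr (-1/2)"
    using x1 cAp f1 f2 f3 jD'
    by (intro mult_mono mult_left_mono) (auto simp: less_imp_le)
  finally show ?thesis using \<open>C < c0 * x powr ee\<close> Q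
    by (intro exI[of _ "3 * n + m"] exI[of _ "3 * n - m"]) linarith
qed

definition Tset :: "real \<Rightarrow> real \<Rightarrow> (int \<times> int) set" where
  "Tset \<rho> \<mu> = {(m :: int, n :: int). n \<noteq> 0 \<and>
      0 < \<bar>\<rho> - real_of_int m / real_of_int n\<bar> \<and>
      \<bar>\<rho> - real_of_int m / real_of_int n\<bar> < \<bar>real_of_int n\<bar> powr (- \<mu>)}"

lemma irr_exp_Tset: "irr_exp \<rho> = Sup {ereal \<mu> | \<mu>. infinite (Tset \<rho> \<mu>)}"
  unfolding irr_exp_def Tset_def by simp

lemma Tset_bounded_finite:
  assumes "0 \<le> \<mu>"
  shows "finite {(m, n) \<in> Tset \<rho> \<mu>. \<bar>n\<bar> \<le> N}"
proof -
  define Bd where "Bd = \<lceil>(\<bar>\<rho>\<bar> + 1) * real_of_int \<bar>N\<bar>\<rceil>"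
  have "{(m, n) \<in> Tset \<rho> \<mu>. \<bar>n\<bar> \<le> N} \<subseteq> {-Bd..Bd} \<times> {-\<bar>N\<bar>..\<bar>N\<bar>}"
  proof safe
    fix m n assume T: "(m, n) \<in> Tset \<rho> \<mu>" and nN: "\<bar>n\<bar> \<le> N"
    have n0: "n \<noteq> 0" and lt: "\<bar>\<rho> - real_of_int m / real_of_int n\<bar> < \<bar>real_of_int n\<bar> powr (- \<mu>)"
      using T by (auto simp: Tset_def)
    have n1: "1 \<le> \<bar>real_of_int n\<bar>" using n0 by linarith
    have "\<bar>real_of_int n\<bar> powr (- \<mu>) \<le> \<bar>real_of_int n\<bar> powr 0"
      by (intro powr_mono) (use assms n1 in auto)
    then have "\<bar>\<rho> - real_of_int m / real_of_int n\<bar> < 1" using lt n1 n0 by simp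
    then have "\<bar>real_of_int m / real_of_int n\<bar> \<le> \<bar>\<rho>\<bar> + 1" by linarith
    then have "\<bar>real_of_int m\<bar> \<le> (\<bar>\<rho>\<bar> + 1) * \<bar>real_of_int n\<bar>" using n0 by (simp add: abs_div divide_le_eq)
    also have "\<dots> \<le> (\<bar>\<rho>\<bar> + 1) * real_of_int \<bar>N\<bar>" using nN by (intro mult_left_mono) auto
    finally have "\<bar>real_of_int m\<bar> \<le> real_of_int Bd" unfolding Bd_def by linarith
    then show "m \<in> {-Bd..Bd}" by auto
    show "n \<in> {-\<bar>N\<bar>..\<bar>N\<bar>}" using nN by auto
  qed
  then show ?thesis by (rule finite_subset) auto
qed

lemma Tset_large:
  assumes "infinite (Tset \<rho> \<mu>)" "0 \<le> \<mu>"
  shows "\<exists>m n. (m, n) \<in> Tset \<rho> \<mu> \<and> N < \<bar>n\<bar>"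
proof -
  have "infinite (Tset \<rho> \<mu> - {(m, n) \<in> Tset \<rho> \<mu>. \<bar>n\<bar> \<le> N})"
    by (rule Diff_infinite_finite[OF Tset_bounded_finite[OF assms(2), of \<rho> N] assms(1)])
  then obtain x where "x \<in> Tset \<rho> \<mu> - {(m, n) \<in> Tset \<rho> \<mu>. \<bar>n\<bar> \<le> N}"
    using infinite_imp_nonempty by blast
  then obtain m n where "(m, n) \<in> Tset \<rho> \<mu>" "\<not> \<bar>n\<bar> \<le> N"
    by (cases x) auto
  then show ?thesis by (intro exI[of _ m] exI[of _ n]) simp
qed

lemma approx_from_irr_exp:
  assumes "ereal \<mu> < irr_exp \<rho>" "0 \<le> \<mu>"
  shows "\<exists>n m :: int. int N0 \<le> n \<and> 0 < n \<and> \<bar>real_of_int m - real_of_int n * \<rho>\<bar> \<le> real_of_int n powr (1 - \<mu>)"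
proof -
  have "ereal \<mu> < Sup {ereal \<mu> | \<mu>. infinite (Tset \<rho> \<mu>)}"
    using assms(1) by (simp only: irr_exp_Tset)
  then obtain x where x: "x \<in> {ereal \<mu> | \<mu>. infinite (Tset \<rho> \<mu>)}" "ereal \<mu> < x"
    unfolding less_Sup_iff by blast
  then obtain \<mu>' where inf: "infinite (Tset \<rho> \<mu>')" and mm: "\<mu> < \<mu>'" by auto
  have "0 \<le> \<mu>'" using mm assms(2) by simp
  obtain m n where T: "(m, n) \<in> Tset \<rho> \<mu>'" and nl: "int N0 < \<bar>n\<bar>"
    using Tset_large[OF inf \<open>0 \<le> \<mu>'\<close>, of "int N0"] by blast
  have n0: "n \<noteq> 0" and lt: "\<bar>\<rho> - real_of_int m / real_of_int n\<bar> < \<bar>real_of_int n\<bar> powr (- \<mu>')"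
    using T by (auto simp: Tset_def)
  have n1: "1 \<le> \<bar>real_of_int n\<bar>" using n0 by linarith
  have "\<bar>real_of_int n\<bar> powr (- \<mu>') \<le> \<bar>real_of_int n\<bar> powr (- \<mu>)"
    by (intro powr_mono) (use mm n1 in auto)
  with lt have lt2: "\<bar>\<rho> - real_of_int m / real_of_int n\<bar> \<le> \<bar>real_of_int n\<bar> powr (- \<mu>)" by linarith
  have "\<bar>real_of_int m - real_of_int n * \<rho>\<bar> = \<bar>real_of_int n\<bar> * \<bar>\<rho> - real_of_int m / real_of_int n\<bar>"
    using n0 by (simp add: abs_mult[symmetric] algebra_simps)
  also have "\<dots> \<le> \<bar>real_of_int n\<bar> * \<bar>real_of_int n\<bar> powr (- \<mu>)"
    using lt2 by (intro mult_left_mono) auto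
  also have "\<dots> = \<bar>real_of_int n\<bar> powr (1 - \<mu>)"
  proof -
    have "1 - \<mu> = 1 + (-\<mu>)" by simp
    then have "\<bar>real_of_int n\<bar> powr (1 - \<mu>) = \<bar>real_of_int n\<bar> powr 1 * \<bar>real_of_int n\<bar> powr (-\<mu>)"
      by (simp only: powr_add)
    then show ?thesis using n1 by simp
  qed
  finally have main: "\<bar>real_of_int m - real_of_int n * \<rho>\<bar> \<le> \<bar>real_of_int n\<bar> powr (1 - \<mu>)" .
  show ?thesis
  proof (cases "n > 0")
    case True
    have e1: "\<bar>real_of_int n\<bar> = real_of_int n" and e2: "\<bar>n\<bar> = n" using True by auto
    have "int N0 \<le> n \<and> 0 < n \<and> \<bar>real_of_int m - real_of_int n * \<rho>\<bar> \<le> real_of_int n powr (1 - \<mu>)"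
      using main nl True unfolding e1 e2 by auto
    then show ?thesis by (intro exI[of _ n] exI[of _ m])
  next
    case False
    then have "n < 0" using n0 by simp
    moreover have "\<bar>real_of_int (-m) - real_of_int (-n) * \<rho>\<bar> = \<bar>real_of_int m - real_of_int n * \<rho>\<bar>"
      by (simp add: abs_minus_commute algebra_simps)
    moreover have e: "real_of_int (-n) = \<bar>real_of_int n\<bar>" using \<open>n < 0\<close> by simp
    ultimately have "int N0 \<le> -n \<and> 0 < -n \<and> \<bar>real_of_int (-m) - real_of_int (-n) * \<rho>\<bar> \<le> real_of_int (-n) powr (1 - \<mu>)"
      using main nl \<open>n < 0\<close> unfolding e by (simp add: abs_if)
    then show ?thesis by (intro exI[of _ "-n"] exI[of _ "-m"])
  qed
qed

lemma irr_exp_ge2: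
  assumes irr: "\<rho> \<notin> \<rat>"
  shows "ereal 2 \<le> irr_exp \<rho>"
proof -
  have inf: "infinite (approx_set \<rho>)" using irr rational_iff_finite_approx_set by blast
  have "approx_set \<rho> \<subseteq> Tset \<rho> 2"
  proof
    fix x assume "x \<in> approx_set \<rho>"
    then obtain h k where x: "x = (h, k)" "k > 0" "\<bar>\<rho> - of_int h / of_int k\<bar> < 1 / real_of_int (k\<^sup>2)"
      unfolding approx_set_def by blast
    have "\<rho> \<noteq> of_int h / of_int k"
    proof
      assume "\<rho> = of_int h / of_int k"
      then have "\<rho> \<in> \<rat>" by simp
      then show False using irr by simp
    qed
    moreover have "\<bar>real_of_int k\<bar> powr (-2) = 1 / (real_of_int k)\<^sup>2"
      using x(2) by (simp add: powr_minus powr_realpow divide_simps)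
    ultimately show "x \<in> Tset \<rho> 2" using x by (simp add: Tset_def)
  qed
  then have "infinite (Tset \<rho> 2)" using inf finite_subset by blast
  then have "ereal 2 \<in> {ereal \<mu> | \<mu>. infinite (Tset \<rho> \<mu>)}" by blast
  then show ?thesis unfolding irr_exp_Tset by (rule Sup_upper)
qed

lemma irr_exp_rat:
  fixes p q :: int
  assumes q: "q > 0" and rho: "\<rho> = real_of_int p / real_of_int q"
  shows "irr_exp \<rho> = 1"
proof (rule antisym)
  show "irr_exp \<rho> \<le> 1"
    unfolding irr_exp_Tset
  proof (rule Sup_least)
    fix y assume "y \<in> {ereal \<mu> | \<mu>. infinite (Tset \<rho> \<mu>)}"
    then obtain \<mu> where y: "y = ereal \<mu>" and inf: "infinite (Tset \<rho> \<mu>)" by blast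
    have "\<mu> \<le> 1"
    proof (rule ccontr)
      assume "\<not> \<mu> \<le> 1"
      then have mu1: "1 < \<mu>" by simp
      define Nb where "Nb = \<lceil>real_of_int q powr (1 / (\<mu> - 1))\<rceil>"
      have "Tset \<rho> \<mu> \<subseteq> {(m, n) \<in> Tset \<rho> \<mu>. \<bar>n\<bar> \<le> Nb}"
      proof safe
        fix m n assume T: "(m, n) \<in> Tset \<rho> \<mu>"
        have n0: "n \<noteq> 0" and pos: "0 < \<bar>\<rho> - real_of_int m / real_of_int n\<bar>"
          and lt: "\<bar>\<rho> - real_of_int m / real_of_int n\<bar> < \<bar>real_of_int n\<bar> powr (- \<mu>)"
          using T by (auto simp: Tset_def)
        define z where "z = p * n - q * m"
        have eq: "\<rho> - real_of_int m / real_of_int n = real_of_int z / (real_of_int q * real_of_int n)"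
          using q n0 by (simp add: rho z_def field_simps)
        have "z \<noteq> 0" using pos eq by auto
        then have z1: "1 \<le> \<bar>real_of_int z\<bar>" by linarith
        define a where "a = \<bar>real_of_int n\<bar>"
        have a1: "1 \<le> a" using n0 by (simp add: a_def)
        have qa: "0 < real_of_int q * a" using q a1 by simp
        have "1 / (real_of_int q * a) \<le> \<bar>real_of_int z\<bar> / (real_of_int q * a)"
          using z1 qa by (simp add: divide_right_mono)
        also have "\<dots> = \<bar>\<rho> - real_of_int m / real_of_int n\<bar>"
          unfolding eq a_def using q by (simp add: abs_mult)
        also have "\<dots> < a powr (- \<mu>)" using lt by (simp add: a_def)
        finally have "1 / (real_of_int q * a) < a powr (- \<mu>)" .
        then have h1: "1 < real_of_int q * (a * a powr (- \<mu>))" using qa by (simp add: field_simps)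
        have h2: "a * a powr (- \<mu>) = a powr (-(\<mu> - 1))"
        proof -
          have "-(\<mu> - 1) = 1 + (-\<mu>)" by simp
          then have "a powr (-(\<mu> - 1)) = a powr 1 * a powr (-\<mu>)" by (simp only: powr_add)
          then show ?thesis using a1 by simp
        qed
        have "1 < real_of_int q * a powr (-(\<mu> - 1))" using h1 unfolding h2 .
        then have "1 < real_of_int q / a powr (\<mu> - 1)" by (simp only: powr_minus divide_inverse)
        moreover have P0: "0 < a powr (\<mu> - 1)" using a1 by simp
        ultimately have "a powr (\<mu> - 1) < real_of_int q" by (simp add: less_divide_eq)
        then have "(a powr (\<mu> - 1)) powr (1 / (\<mu> - 1)) < real_of_int q powr (1 / (\<mu> - 1))"
          using mu1 a1 by (intro powr_less_mono2) auto
        then have "a < real_of_int q powr (1 / (\<mu> - 1))"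
          using mu1 a1 by (simp add: powr_powr)
        then have "a \<le> real_of_int Nb" unfolding Nb_def by linarith
        then show "\<bar>n\<bar> \<le> Nb" by (simp add: a_def)
      qed
      moreover have "finite {(m, n) \<in> Tset \<rho> \<mu>. \<bar>n\<bar> \<le> Nb}"
        using mu1 by (intro Tset_bounded_finite) simp
      ultimately show False using inf finite_subset by blast
    qed
    then show "y \<le> 1" using y by simp
  qed
next
  show "1 \<le> irr_exp \<rho>"
  proof (rule dense_le)
    fix y :: ereal assume y1: "y < 1"
    show "y \<le> irr_exp \<rho>"
    proof (cases y)
      case MInf then show ?thesis by simp
    next
      case PInf then show ?thesis using y1 by simp
    next
      case (real \<mu>)
      then have mu1: "\<mu> < 1" using y1 by simp
      define f where "f t = (p * int t + 1, q * int t)" for t :: nat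
      have inj: "inj_on f {2..}" unfolding f_def inj_on_def using q by auto
      have "infinite {2::nat..}" by (simp add: infinite_Ici)
      then have infimg: "infinite (f ` {2..})" using inj finite_imageD by blast
      have "f ` {2..} \<subseteq> Tset \<rho> \<mu>"
      proof (rule image_subsetI)
        fix t :: nat assume t: "t \<in> {2..}"
        define a where "a = real_of_int q * real t"
        have q1: "1 \<le> real_of_int q" using q by simp
        have t2: "2 \<le> real t" using t by simp
        have a2: "2 \<le> a" using mult_mono[OF q1 t2] q by (simp add: a_def)
        have eq: "\<rho> - real_of_int (p * int t + 1) / real_of_int (q * int t) = - (1 / a)"
          using q t by (simp add: rho a_def field_simps)
        have "a powr \<mu> < a powr 1" using a2 mu1 by (intro powr_less_mono) auto
        then have "a powr \<mu> < a" using a2 by simp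
        then have "1 / a < 1 / a powr \<mu>" using a2 by (intro divide_strict_left_mono) auto
        then have H1: "1 / a < \<bar>real_of_int (q * int t)\<bar> powr (-\<mu>)"
          using q a2 by (simp add: a_def powr_minus divide_inverse)
        have ne: "\<rho> \<noteq> real_of_int (p * int t + 1) / real_of_int (q * int t)"
          using eq a2 by auto
        have "(p * int t + 1, q * int t) \<in> Tset \<rho> \<mu>"
          unfolding Tset_def using H1 ne eq q t a2 by simp
        then show "f t \<in> Tset \<rho> \<mu>" by (simp add: f_def)
      qed
      then have "infinite (Tset \<rho> \<mu>)" using infimg finite_subset by blast
      then have "ereal \<mu> \<in> {ereal \<mu> | \<mu>. infinite (Tset \<rho> \<mu>)}" by blast
      then show ?thesis unfolding irr_exp_Tset real by (rule Sup_upper)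
    qed
  qed
qed

theorem proposition4p1:
  fixes \<alpha>1 \<alpha>2 r b s :: real
  assumes "\<alpha>1 \<noteq> 0" and "\<alpha>2 \<noteq> 0" and "r = \<alpha>2 / \<alpha>1"
  shows "(r < 1/4 \<and> s < -1/2 \<longrightarrow>
            \<not> bilinear_est \<alpha>1 \<alpha>2 s b (\<lambda>_. True) (\<lambda>_. True))
       \<and> (r = 1 \<and> s < -1/2 \<longrightarrow>
            \<not> bilinear_est \<alpha>1 \<alpha>2 s b (\<lambda>F. F 0 = (\<lambda>_. 0)) (\<lambda>G. G 0 = (\<lambda>_. 0)))
       \<and> (r = 1 \<longrightarrow>
            \<not> bilinear_est \<alpha>1 \<alpha>2 s b (\<lambda>_. True) (\<lambda>G. G 0 = (\<lambda>_. 0))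
          \<and> \<not> bilinear_est \<alpha>1 \<alpha>2 s b (\<lambda>F. F 0 = (\<lambda>_. 0)) (\<lambda>_. True))
       \<and> (1/4 \<le> r \<and> r \<noteq> 1 \<and> s < s_r r \<longrightarrow>
            \<not> bilinear_est \<alpha>1 \<alpha>2 s b (\<lambda>_. True) (\<lambda>_. True))"

proof -
  have a2r: "\<alpha>2 = r * \<alpha>1" using assms by simp
  have PA: "\<not> bilinear_est \<alpha>1 \<alpha>2 s b (\<lambda>_. True) (\<lambda>_. True)" if s: "s < -1/2"
  proof (rule fail_lemma)
    fix C
    obtain k1 k2 where "C < Qf \<alpha>1 \<alpha>2 s k1 k2" using ab_case[OF s] by blast
    then show "\<exists>k1 k2. (\<forall>a. True) \<and> (\<forall>a. True) \<and> C < Qf \<alpha>1 \<alpha>2 s k1 k2" by blast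
  qed
  have PB: "\<not> bilinear_est \<alpha>1 \<alpha>2 s b (\<lambda>F. F 0 = (\<lambda>_. 0)) (\<lambda>G. G 0 = (\<lambda>_. 0))" if s: "s < -1/2"
  proof (rule fail_lemma)
    fix C
    obtain k1 k2 where "k1 \<noteq> 0" "k2 \<noteq> 0" "C < Qf \<alpha>1 \<alpha>2 s k1 k2" using ab_case[OF s] by blast
    then show "\<exists>k1 k2. (\<forall>a. sng k1 a 0 = (\<lambda>_. 0)) \<and> (\<forall>a. sng k2 a 0 = (\<lambda>_. 0)) \<and> C < Qf \<alpha>1 \<alpha>2 s k1 k2"
      by (intro exI[of _ k1] exI[of _ k2]) (simp add: sng_zero)
  qed
  have PC: "\<not> bilinear_est \<alpha>1 \<alpha>2 s b (\<lambda>_. True) (\<lambda>G. G 0 = (\<lambda>_. 0))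
          \<and> \<not> bilinear_est \<alpha>1 \<alpha>2 s b (\<lambda>F. F 0 = (\<lambda>_. 0)) (\<lambda>_. True)" if r1: "r = 1"
  proof -
    have e: "\<alpha>2 = \<alpha>1" using a2r r1 by simp
    have c1: "\<not> bilinear_est \<alpha>1 \<alpha>1 s b (\<lambda>_. True) (\<lambda>G. G 0 = (\<lambda>_. 0))"
    proof (rule fail_lemma)
      fix C
      obtain N where "N \<noteq> 0" "C < Qf \<alpha>1 \<alpha>1 s 0 N" using c_case by blast
      then show "\<exists>k1 k2. (\<forall>a. True) \<and> (\<forall>a. sng k2 a 0 = (\<lambda>_. 0)) \<and> C < Qf \<alpha>1 \<alpha>1 s k1 k2"
        by (intro exI[of _ 0] exI[of _ N]) (simp add: sng_zero)
    qed
    have c2: "\<not> bilinear_est \<alpha>1 \<alpha>1 s b (\<lambda>F. F 0 = (\<lambda>_. 0)) (\<lambda>_. True)"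
    proof (rule fail_lemma)
      fix C
      obtain N where "N \<noteq> 0" "C < Qf \<alpha>1 \<alpha>1 s N 0" using c_case by blast
      then show "\<exists>k1 k2. (\<forall>a. sng k1 a 0 = (\<lambda>_. 0)) \<and> (\<forall>a. True) \<and> C < Qf \<alpha>1 \<alpha>1 s k1 k2"
        by (intro exI[of _ N] exI[of _ 0]) (simp add: sng_zero)
    qed
    show ?thesis using c1 c2 e by simp
  qed
  have PD: "\<not> bilinear_est \<alpha>1 \<alpha>2 s b (\<lambda>_. True) (\<lambda>_. True)"
    if r4: "1/4 \<le> r" and r1: "r \<noteq> 1" and ss: "s < s_r r"
  proof (rule fail_lemma)
    fix C
    define \<rho> where "\<rho> = sqrt (12 * r - 3)"
    have rho0: "0 \<le> \<rho>" using r4 by (simp add: \<rho>_def)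
    have rho2: "\<rho>^2 = 12 * r - 3" using r4 by (simp add: \<rho>_def)
    have a2: "\<alpha>2 = \<alpha>1 * ((\<rho>^2 + 3)/12)" using a2r rho2 by simp
    have rho3: "\<rho> \<noteq> 3"
    proof
      assume "\<rho> = 3"
      then have "12 * r - 3 = 9" using rho2 by simp
      then show False using r1 by simp
    qed
    have sig: "sigma_r r = irr_exp \<rho>" by (simp add: sigma_r_def \<rho>_def)
    have "\<exists>k1 k2. C < Qf \<alpha>1 \<alpha>2 s k1 k2"
    proof (cases "\<rho> \<in> \<rat>")
      case True
      then obtain p q :: int where q: "q > 0" and rq: "\<rho> = of_int p / of_int q"
        by (metis Rats_cases')
      have "sigma_r r = 1" using sig irr_exp_rat[OF q rq] by simp
      then have "s_r r = 1" by (simp add: s_r_def)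
      then have s1: "s < (3 - 1) / 2" using ss by simp
      show ?thesis
      proof (rule d_core[OF a2 rho0 rho3 _ _ s1])
        fix N0 :: nat
        define t where "t = int N0 + 1"
        have "int N0 + 1 \<le> q * t" using q mult_right_mono[of 1 q t] by (simp add: t_def)
        then have "int N0 \<le> q * t" by simp
        moreover have "0 < q * t" using q by (simp add: t_def)
        moreover have "\<bar>real_of_int (p * t) - real_of_int (q * t) * \<rho>\<bar> \<le> real_of_int (q * t) powr (1 - 3)"
        proof -
          have "real_of_int (p * t) - real_of_int (q * t) * \<rho> = 0" using q by (simp add: rq)
          then show ?thesis by (simp only: abs_zero powr_ge_zero)
        qed
        ultimately show "\<exists>n m :: int. int N0 \<le> n \<and> 0 < n \<and> \<bar>real_of_int m - real_of_int n * \<rho>\<bar> \<le> real_of_int n powr (1 - 3)"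
          by blast
      qed simp_all
    next
      case False
      have ge2: "ereal 2 \<le> irr_exp \<rho>" by (rule irr_exp_ge2[OF False])
      show ?thesis
      proof (cases "irr_exp \<rho> \<ge> 3")
        case True
        then have "s_r r = 1" using sig True by (simp add: s_r_def)
        then have s1: "s < 1" using ss by simp
        define \<mu> where "\<mu> = (max 2 (2 * s + 1) + 3) / 2"
        define Mm where "Mm = max 2 (2 * s + 1)"
        have M: "2 \<le> Mm" "2 * s + 1 \<le> Mm" "Mm < 3" using s1 by (auto simp: Mm_def)
        have mu: "2 * \<mu> = Mm + 3" by (simp add: \<mu>_def Mm_def)
        have m11: "1 \<le> \<mu>" using M mu by linarith
        have m12: "\<mu> \<le> 3" using M mu by linarith
        have m13': "2 * s + 1 < \<mu>" using M mu by linarith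
        have m13: "s < (\<mu> - 1)/2" using m13' by (simp add: field_simps)
        have m14: "\<mu> < 3" using M mu by linarith
        note m1 = m11 m12 m13 m14
        have "ereal \<mu> < 3" using m1(4) by simp
        then have lt: "ereal \<mu> < irr_exp \<rho>" using True by (rule order_less_le_trans)
        have mu0: "0 \<le> \<mu>" using m11 by simp
        have H: "\<And>N0. \<exists>n m :: int. int N0 \<le> n \<and> 0 < n \<and> \<bar>real_of_int m - real_of_int n * \<rho>\<bar> \<le> real_of_int n powr (1 - \<mu>)"
          by (rule approx_from_irr_exp[OF lt mu0])
        show ?thesis by (rule d_core[OF a2 rho0 rho3 m1(1) m1(2) m1(3) H])
      next
        case False
        then have lt3: "irr_exp \<rho> < 3" by simp
        then obtain \<sigma> where sg: "irr_exp \<rho> = ereal \<sigma>" using ge2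
          by (cases "irr_exp \<rho>") auto
        have s2: "2 \<le> \<sigma>" "\<sigma> < 3" using ge2 lt3 sg by auto
        have "s_r r = (\<sigma> - 1) / 2" using sig sg s2 by (simp add: s_r_def)
        then have s1: "2 * s + 1 < \<sigma>" using ss by (simp add: field_simps)
        define \<mu> where "\<mu> = (max 1 (2 * s + 1) + \<sigma>) / 2"
        define Mm where "Mm = max 1 (2 * s + 1)"
        have M: "1 \<le> Mm" "2 * s + 1 \<le> Mm" "Mm < \<sigma>" using s1 s2 by (auto simp: Mm_def)
        have mu: "2 * \<mu> = Mm + \<sigma>" by (simp add: \<mu>_def Mm_def)
        have m11: "1 \<le> \<mu>" using M s2 mu by linarith
        have m12: "\<mu> \<le> 3" using M s2 mu by linarith
        have m13': "2 * s + 1 < \<mu>" using M s2 mu by linarith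
        have m13: "s < (\<mu> - 1)/2" using m13' by (simp add: field_simps)
        have m14: "\<mu> < \<sigma>" using M s2 mu by linarith
        note m1 = m11 m12 m13 m14
        have lt: "ereal \<mu> < irr_exp \<rho>" using sg m1(4) by simp
        have mu0: "0 \<le> \<mu>" using m11 by simp
        have H: "\<And>N0. \<exists>n m :: int. int N0 \<le> n \<and> 0 < n \<and> \<bar>real_of_int m - real_of_int n * \<rho>\<bar> \<le> real_of_int n powr (1 - \<mu>)"
          by (rule approx_from_irr_exp[OF lt mu0])
        show ?thesis by (rule d_core[OF a2 rho0 rho3 m1(1) m1(2) m1(3) H])
      qed
    qed
    then show "\<exists>k1 k2. (\<forall>a. True) \<and> (\<forall>a. True) \<and> C < Qf \<alpha>1 \<alpha>2 s k1 k2" by blast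
  qed
  show ?thesis
  proof (intro conjI impI)
    show "\<not> bilinear_est \<alpha>1 \<alpha>2 s b (\<lambda>_. True) (\<lambda>_. True)" if "r < 1/4 \<and> s < -1/2" using PA that by simp
    show "\<not> bilinear_est \<alpha>1 \<alpha>2 s b (\<lambda>F. F 0 = (\<lambda>_. 0)) (\<lambda>G. G 0 = (\<lambda>_. 0))" if "r = 1 \<and> s < -1/2"
      using PB that by simp
    show "\<not> bilinear_est \<alpha>1 \<alpha>2 s b (\<lambda>_. True) (\<lambda>G. G 0 = (\<lambda>_. 0))" if "r = 1" using PC that by simp
    show "\<not> bilinear_est \<alpha>1 \<alpha>2 s b (\<lambda>F. F 0 = (\<lambda>_. 0)) (\<lambda>_. True)" if "r = 1" using PC that by simp
    show "\<not> bilinear_est \<alpha>1 \<alpha>2 s b (\<lambda>_. True) (\<lambda>_. True)" if "1/4 \<le> r \<and> r \<noteq> 1 \<and> s < s_r r"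
      using PD that by simp
  qed
qed

end
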